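(* Let $C\in\mathscr{C}$ and let $Z_C$ be obtained as follows: choose a distinguished triangle $V\to U\overset{a}{\to}C\to V[1]$ with $U\in\mathcal{U},V\in\mathcal{V}$; choose a distinguished triangle $T[-1]\to S[-1]\overset{b}{\to}U\to T$ with $S\in\mathcal{S},T\in\mathcal{T}$; and choose a distinguished triangle $S[-1]\overset{a\circ b}{\to}C\overset{z_C}{\to}Z_C\to S$. Then: (1) $Z_C\in\mathscr{C}^+$; (2) if $C\in\mathscr{C}^-$, then $Z_C\in\mathcal{H}$.
   Context: $\mathscr{C}$ is a triangulated category with shift $[1]$; subcategories are full, additive, closed under isomorphisms and direct summands. $\mathrm{Ext}^1(X,Y)=\mathscr{C}(X,Y[1])$. $\mathcal{M}\ast\mathcal{N}$ is the full subcategory of objects $C$ admitting a distinguished triangle $M\to C\to N\to M[1]$ with $M\in\mathcal{M}$, $N\in\mathcal{N}$. A cotorsion pair $(\mathcal{U},\mathcal{V})$: $\mathrm{Ext}^1(\mathcal{U},\mathcal{V})=0$ and $\mathscr{C}=\mathcal{U}\ast\mathcal{V}[1]$. Fix a twin cotorsion pair, i.e. cotorsion pairs $(\mathcal{S},\mathcal{T}),(\mathcal{U},\mathcal{V})$ with $\mathrm{Ext}^1(\mathcal{S},\mathcal{V})=0$. Put $\mathcal{W}=\mathcal{T}\cap\mathcal{U}$, $\mathscr{C}^-=\mathcal{S}[-1]\ast\mathcal{W}$, $\mathscr{C}^+=\mathcal{W}\ast\mathcal{V}[1]$, $\mathcal{H}=\mathscr{C}^+\cap\mathscr{C}^-$.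 *)

theory Defs
  imports Main
begin

text \<open>A triangle X -f-> Y -g-> Z -h-> X[1] is recorded by the triple of its morphisms.\<close>

record ('o, 'm) tcat =
  Ob    :: "'o set"
  Mor   :: "'m set"
  tdom  :: "'m \<Rightarrow> 'o"
  tcod  :: "'m \<Rightarrow> 'o"
  cmp   :: "'m \<Rightarrow> 'm \<Rightarrow> 'm"   (* cmp g f = g \<circ> f *)
  ident :: "'o \<Rightarrow> 'm"
  plus  :: "'m \<Rightarrow> 'm \<Rightarrow> 'm"
  zer   :: "'o \<Rightarrow> 'o \<Rightarrow> 'm"
  ngt   :: "'m \<Rightarrow> 'm"
  shO   :: "'o \<Rightarrow> 'o"
  shM   :: "'m \<Rightarrow> 'm"
  dtri  :: "('m \<times> 'm \<times> 'm) set"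

definition hom :: "('o, 'm) tcat \<Rightarrow> 'o \<Rightarrow> 'o \<Rightarrow> 'm set" where
  "hom C X Y = {f \<in> Mor C. tdom C f = X \<and> tcod C f = Y}"

definition is_iso_obj :: "('o, 'm) tcat \<Rightarrow> 'o \<Rightarrow> 'o \<Rightarrow> bool" where
  "is_iso_obj C X Y \<longleftrightarrow> (\<exists>f\<in>hom C X Y. \<exists>g\<in>hom C Y X.
      cmp C g f = ident C X \<and> cmp C f g = ident C Y)"

definition is_isomorphism :: "('o, 'm) tcat \<Rightarrow> 'm \<Rightarrow> bool" where
  "is_isomorphism C f \<longleftrightarrow> f \<in> Mor C \<and> (\<exists>g\<in>hom C (tcod C f) (tdom C f).
      cmp C g f = ident C (tdom C f) \<and> cmp C f g = ident C (tcod C f))"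

definition is_zero_obj :: "('o, 'm) tcat \<Rightarrow> 'o \<Rightarrow> bool" where
  "is_zero_obj C Z \<longleftrightarrow> Z \<in> Ob C \<and> ident C Z = zer C Z Z"

definition is_biproduct :: "('o, 'm) tcat \<Rightarrow> 'o \<Rightarrow> 'o \<Rightarrow> 'o \<Rightarrow> bool" where
  "is_biproduct C X Y B \<longleftrightarrow> X \<in> Ob C \<and> Y \<in> Ob C \<and> B \<in> Ob C \<and>
     (\<exists>i1\<in>hom C X B. \<exists>i2\<in>hom C Y B. \<exists>p1\<in>hom C B X. \<exists>p2\<in>hom C B Y.
        cmp C p1 i1 = ident C X \<and> cmp C p2 i2 = ident C Y \<and>
        cmp C p1 i2 = zer C Y X \<and> cmp C p2 i1 = zer C X Y \<and>
        plus C (cmp C i1 p1) (cmp C i2 p2) = ident C B)"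

definition is_category :: "('o, 'm) tcat \<Rightarrow> bool" where
  "is_category C \<longleftrightarrow>
     (\<forall>f\<in>Mor C. tdom C f \<in> Ob C \<and> tcod C f \<in> Ob C) \<and>
     (\<forall>X\<in>Ob C. ident C X \<in> hom C X X) \<and>
     (\<forall>X\<in>Ob C. \<forall>Y\<in>Ob C. \<forall>Z\<in>Ob C. \<forall>f\<in>hom C X Y. \<forall>g\<in>hom C Y Z. cmp C g f \<in> hom C X Z) \<and>
     (\<forall>X\<in>Ob C. \<forall>Y\<in>Ob C. \<forall>f\<in>hom C X Y.
        cmp C (ident C Y) f = f \<and> cmp C f (ident C X) = f) \<and>
     (\<forall>W\<in>Ob C. \<forall>X\<in>Ob C. \<forall>Y\<in>Ob C. \<forall>Z\<in>Ob C.
        \<forall>f\<in>hom C W X. \<forall>g\<in>hom C X Y. \<forall>h\<in>hom C Y Z.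
          cmp C h (cmp C g f) = cmp C (cmp C h g) f)"

definition is_preadditive :: "('o, 'm) tcat \<Rightarrow> bool" where
  "is_preadditive C \<longleftrightarrow> is_category C \<and>
     (\<forall>X\<in>Ob C. \<forall>Y\<in>Ob C.
        zer C X Y \<in> hom C X Y \<and>
        (\<forall>f\<in>hom C X Y. \<forall>g\<in>hom C X Y. plus C f g \<in> hom C X Y) \<and>
        (\<forall>f\<in>hom C X Y. ngt C f \<in> hom C X Y) \<and>
        (\<forall>f\<in>hom C X Y. \<forall>g\<in>hom C X Y. \<forall>h\<in>hom C X Y.
            plus C (plus C f g) h = plus C f (plus C g h)) \<and>
        (\<forall>f\<in>hom C X Y. \<forall>g\<in>hom C X Y. plus C f g = plus C g f) \<and>
        (\<forall>f\<in>hom C X Y. plus C f (zer C X Y) = f) \<and>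
        (\<forall>f\<in>hom C X Y. plus C f (ngt C f) = zer C X Y)) \<and>
     (\<forall>X\<in>Ob C. \<forall>Y\<in>Ob C. \<forall>Z\<in>Ob C.
        (\<forall>f\<in>hom C X Y. \<forall>g\<in>hom C Y Z. \<forall>g'\<in>hom C Y Z.
            cmp C (plus C g g') f = plus C (cmp C g f) (cmp C g' f)) \<and>
        (\<forall>f\<in>hom C X Y. \<forall>f'\<in>hom C X Y. \<forall>g\<in>hom C Y Z.
            cmp C g (plus C f f') = plus C (cmp C g f) (cmp C g f')))"

definition is_additive :: "('o, 'm) tcat \<Rightarrow> bool" where
  "is_additive C \<longleftrightarrow> is_preadditive C \<and>
     (\<exists>Z. is_zero_obj C Z) \<and>
     (\<forall>X\<in>Ob C. \<forall>Y\<in>Ob C. \<exists>B. is_biproduct C X Y B)"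

definition is_shift :: "('o, 'm) tcat \<Rightarrow> bool" where
  "is_shift C \<longleftrightarrow>
     (\<forall>X\<in>Ob C. shO C X \<in> Ob C) \<and>
     (\<forall>X\<in>Ob C. \<forall>Y\<in>Ob C. \<forall>f\<in>hom C X Y. shM C f \<in> hom C (shO C X) (shO C Y)) \<and>
     (\<forall>X\<in>Ob C. shM C (ident C X) = ident C (shO C X)) \<and>
     (\<forall>X\<in>Ob C. \<forall>Y\<in>Ob C. \<forall>Z\<in>Ob C. \<forall>f\<in>hom C X Y. \<forall>g\<in>hom C Y Z.
        shM C (cmp C g f) = cmp C (shM C g) (shM C f)) \<and>
     (\<forall>X\<in>Ob C. \<forall>Y\<in>Ob C. \<forall>f\<in>hom C X Y. \<forall>g\<in>hom C X Y.
        shM C (plus C f g) = plus C (shM C f) (shM C g)) \<and>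
     (\<forall>X\<in>Ob C. \<forall>Y\<in>Ob C. bij_betw (shM C) (hom C X Y) (hom C (shO C X) (shO C Y))) \<and>
     (\<forall>Y\<in>Ob C. \<exists>X\<in>Ob C. is_iso_obj C (shO C X) Y)"

definition is_triangle :: "('o, 'm) tcat \<Rightarrow> 'm \<Rightarrow> 'm \<Rightarrow> 'm \<Rightarrow> bool" where
  "is_triangle C f g h \<longleftrightarrow> f \<in> Mor C \<and> g \<in> Mor C \<and> h \<in> Mor C \<and>
     tcod C f = tdom C g \<and> tcod C g = tdom C h \<and> tcod C h = shO C (tdom C f)"

definition dist :: "('o, 'm) tcat \<Rightarrow> 'm \<Rightarrow> 'm \<Rightarrow> 'm \<Rightarrow> bool" where
  "dist C f g h \<longleftrightarrow> is_triangle C f g h \<and> (f, g, h) \<in> dtri C"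

definition is_triangulated :: "('o, 'm) tcat \<Rightarrow> bool" where
  "is_triangulated C \<longleftrightarrow> is_additive C \<and> is_shift C \<and>
     (\<forall>t\<in>dtri C. case t of (f, g, h) \<Rightarrow> is_triangle C f g h) \<and>
     \<comment> \<open>TR1: closure under isomorphisms of triangles\<close>
     (\<forall>f g h f' g' h' u v w. dist C f g h \<and> is_triangle C f' g' h' \<and>
        is_isomorphism C u \<and> is_isomorphism C v \<and> is_isomorphism C w \<and>
        u \<in> hom C (tdom C f) (tdom C f') \<and> v \<in> hom C (tdom C g) (tdom C g') \<and>
        w \<in> hom C (tdom C h) (tdom C h') \<and>
        cmp C v f = cmp C f' u \<and> cmp C w g = cmp C g' v \<and>
        cmp C (shM C u) h = cmp C h' w
        \<longrightarrow> dist C f' g' h') \<and>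
     \<comment> \<open>TR1: X = X \<rightarrow> 0 \<rightarrow> X[1] is distinguished\<close>
     (\<forall>X\<in>Ob C. \<forall>Z. is_zero_obj C Z \<longrightarrow>
        dist C (ident C X) (zer C X Z) (zer C Z (shO C X))) \<and>
     \<comment> \<open>TR1: every morphism extends to a distinguished triangle\<close>
     (\<forall>f\<in>Mor C. \<exists>g h. dist C f g h) \<and>
     \<comment> \<open>TR2: rotation\<close>
     (\<forall>f g h. dist C f g h \<longleftrightarrow> dist C g h (ngt C (shM C f))) \<and>
     \<comment> \<open>TR3: morphisms of triangles\<close>
     (\<forall>f g h f' g' h' u v. dist C f g h \<and> dist C f' g' h' \<and>
        u \<in> hom C (tdom C f) (tdom C f') \<and> v \<in> hom C (tdom C g) (tdom C g') \<and>
        cmp C v f = cmp C f' u \<longrightarrow>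
        (\<exists>w\<in>hom C (tdom C h) (tdom C h').
           cmp C w g = cmp C g' v \<and> cmp C (shM C u) h = cmp C h' w)) \<and>
     \<comment> \<open>TR4: octahedral axiom\<close>
     (\<forall>f g f1 f2 g1 g2 h1 h2. tcod C f = tdom C g \<and>
        dist C f f1 f2 \<and> dist C g g1 g2 \<and> dist C (cmp C g f) h1 h2 \<longrightarrow>
        (\<exists>u v. u \<in> hom C (tdom C f2) (tdom C h2) \<and> v \<in> hom C (tdom C h2) (tdom C g2) \<and>
           dist C u v (cmp C (shM C f1) g2) \<and>
           cmp C u f1 = cmp C h1 g \<and> cmp C h2 u = f2 \<and>
           cmp C v h1 = g1 \<and> cmp C g2 v = cmp C (shM C f) h2))"

text \<open>Full additive subcategory closed under isomorphisms and direct summands,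
  identified with its class of objects.\<close>
definition is_subcat :: "('o, 'm) tcat \<Rightarrow> 'o set \<Rightarrow> bool" where
  "is_subcat C A \<longleftrightarrow> A \<subseteq> Ob C \<and>
     (\<exists>Z\<in>A. is_zero_obj C Z) \<and>
     (\<forall>X\<in>A. \<forall>Y. is_iso_obj C X Y \<longrightarrow> Y \<in> A) \<and>
     (\<forall>X Y B. is_biproduct C X Y B \<longrightarrow> X \<in> A \<longrightarrow> Y \<in> A \<longrightarrow> B \<in> A) \<and>
     (\<forall>X Y B. is_biproduct C X Y B \<longrightarrow> B \<in> A \<longrightarrow> X \<in> A)"

text \<open>Ext^1(A,B) = 0, where Ext^1(X,Y) = Hom(X, Y[1]).\<close>
definition ext1_zero :: "('o, 'm) tcat \<Rightarrow> 'o set \<Rightarrow> 'o set \<Rightarrow> bool" where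
  "ext1_zero C A B \<longleftrightarrow> (\<forall>X\<in>A. \<forall>Y\<in>B. hom C X (shO C Y) = {zer C X (shO C Y)})"

definition ext_star :: "('o, 'm) tcat \<Rightarrow> 'o set \<Rightarrow> 'o set \<Rightarrow> 'o set" where
  "ext_star C M N = {X \<in> Ob C. \<exists>A B f g h. A \<in> M \<and> B \<in> N \<and> dist C f g h \<and>
       f \<in> hom C A X \<and> g \<in> hom C X B}"

text \<open>A[1] and A[-1] as subcategories (closed under isomorphisms).\<close>
definition shift_up :: "('o, 'm) tcat \<Rightarrow> 'o set \<Rightarrow> 'o set" where
  "shift_up C A = {X \<in> Ob C. \<exists>Y\<in>A. is_iso_obj C (shO C Y) X}"

definition shift_down :: "('o, 'm) tcat \<Rightarrow> 'o set \<Rightarrow> 'o set" where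
  "shift_down C A = {X \<in> Ob C. \<exists>Y\<in>A. is_iso_obj C (shO C X) Y}"

definition cotorsion_pair :: "('o, 'm) tcat \<Rightarrow> 'o set \<Rightarrow> 'o set \<Rightarrow> bool" where
  "cotorsion_pair C U V \<longleftrightarrow> is_subcat C U \<and> is_subcat C V \<and> ext1_zero C U V \<and>
     Ob C = ext_star C U (shift_up C V)"

definition twin_cotorsion_pair ::
  "('o, 'm) tcat \<Rightarrow> 'o set \<Rightarrow> 'o set \<Rightarrow> 'o set \<Rightarrow> 'o set \<Rightarrow> bool" where
  "twin_cotorsion_pair C S T U V \<longleftrightarrow>
     cotorsion_pair C S T \<and> cotorsion_pair C U V \<and> ext1_zero C S V"

definition Wcore :: "'o set \<Rightarrow> 'o set \<Rightarrow> 'o set" where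
  "Wcore T U = T \<inter> U"

definition Cminus :: "('o, 'm) tcat \<Rightarrow> 'o set \<Rightarrow> 'o set \<Rightarrow> 'o set \<Rightarrow> 'o set" where
  "Cminus C S T U = ext_star C (shift_down C S) (Wcore T U)"

definition Cplus :: "('o, 'm) tcat \<Rightarrow> 'o set \<Rightarrow> 'o set \<Rightarrow> 'o set \<Rightarrow> 'o set" where
  "Cplus C T U V = ext_star C (Wcore T U) (shift_up C V)"

definition Hheart :: "('o, 'm) tcat \<Rightarrow> 'o set \<Rightarrow> 'o set \<Rightarrow> 'o set \<Rightarrow> 'o set \<Rightarrow> 'o set" where
  "Hheart C S T U V = Cplus C T U V \<inter> Cminus C S T U"

end

theory Submission
  imports Defs
begin


locale TC =
  fixes C :: "('o,'m) tcat"
  assumes tri: "is_triangulated C"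
begin

lemma add: "is_additive C" using tri unfolding is_triangulated_def by blast
lemma pre: "is_preadditive C" using add unfolding is_additive_def by blast
lemma cat: "is_category C" using pre unfolding is_preadditive_def by blast
lemma shift: "is_shift C" using tri unfolding is_triangulated_def by blast

lemma homD: "f \<in> hom C X Y \<Longrightarrow> f \<in> Mor C \<and> tdom C f = X \<and> tcod C f = Y"
  unfolding hom_def by blast
lemma homI: "f \<in> Mor C \<Longrightarrow> f \<in> hom C (tdom C f) (tcod C f)"
  unfolding hom_def by blast

lemma hom_ob1: "f \<in> hom C X Y \<Longrightarrow> X \<in> Ob C"
  using cat unfolding is_category_def hom_def by blast
lemma hom_ob2: "f \<in> hom C X Y \<Longrightarrow> Y \<in> Ob C"
  using cat unfolding is_category_def hom_def by blast

lemma id_hom[intro,simp]: "X \<in> Ob C \<Longrightarrow> ident C X \<in> hom C X X"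
  using cat unfolding is_category_def by blast

lemma CA: "(\<forall>X\<in>Ob C. \<forall>Y\<in>Ob C. \<forall>Z\<in>Ob C. \<forall>f\<in>hom C X Y. \<forall>g\<in>hom C Y Z. cmp C g f \<in> hom C X Z) \<and>
     (\<forall>X\<in>Ob C. \<forall>Y\<in>Ob C. \<forall>f\<in>hom C X Y.
        cmp C (ident C Y) f = f \<and> cmp C f (ident C X) = f) \<and>
     (\<forall>W\<in>Ob C. \<forall>X\<in>Ob C. \<forall>Y\<in>Ob C. \<forall>Z\<in>Ob C.
        \<forall>f\<in>hom C W X. \<forall>g\<in>hom C X Y. \<forall>h\<in>hom C Y Z.
          cmp C h (cmp C g f) = cmp C (cmp C h g) f)"
  using cat unfolding is_category_def by (elim conjE) simp

lemma comp_hom[intro]: "f \<in> hom C X Y \<Longrightarrow> g \<in> hom C Y Z \<Longrightarrow> cmp C g f \<in> hom C X Z"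
  using CA hom_ob1 hom_ob2 by blast

lemma id_l[simp]: "f \<in> hom C X Y \<Longrightarrow> cmp C (ident C Y) f = f"
  using CA hom_ob1 hom_ob2 by blast
lemma id_r[simp]: "f \<in> hom C X Y \<Longrightarrow> cmp C f (ident C X) = f"
  using CA hom_ob1 hom_ob2 by blast

lemma assoc: "f \<in> hom C W X \<Longrightarrow> g \<in> hom C X Y \<Longrightarrow> h \<in> hom C Y Z \<Longrightarrow>
   cmp C h (cmp C g f) = cmp C (cmp C h g) f"
  using CA[THEN conjunct2, THEN conjunct2, rule_format, OF hom_ob1 hom_ob2 hom_ob2 hom_ob2] by blast

lemma PA: "\<forall>X\<in>Ob C. \<forall>Y\<in>Ob C.
        zer C X Y \<in> hom C X Y \<and>
        (\<forall>f\<in>hom C X Y. \<forall>g\<in>hom C X Y. plus C f g \<in> hom C X Y) \<and>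
        (\<forall>f\<in>hom C X Y. ngt C f \<in> hom C X Y) \<and>
        (\<forall>f\<in>hom C X Y. \<forall>g\<in>hom C X Y. \<forall>h\<in>hom C X Y.
            plus C (plus C f g) h = plus C f (plus C g h)) \<and>
        (\<forall>f\<in>hom C X Y. \<forall>g\<in>hom C X Y. plus C f g = plus C g f) \<and>
        (\<forall>f\<in>hom C X Y. plus C f (zer C X Y) = f) \<and>
        (\<forall>f\<in>hom C X Y. plus C f (ngt C f) = zer C X Y)"
  using pre unfolding is_preadditive_def by (elim conjE)
lemma PB: "\<forall>X\<in>Ob C. \<forall>Y\<in>Ob C. \<forall>Z\<in>Ob C.
        (\<forall>f\<in>hom C X Y. \<forall>g\<in>hom C Y Z. \<forall>g'\<in>hom C Y Z.
            cmp C (plus C g g') f = plus C (cmp C g f) (cmp C g' f)) \<and>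
        (\<forall>f\<in>hom C X Y. \<forall>f'\<in>hom C X Y. \<forall>g\<in>hom C Y Z.
            cmp C g (plus C f f') = plus C (cmp C g f) (cmp C g f'))"
  using pre unfolding is_preadditive_def by (elim conjE)

lemma zer_hom[intro,simp]: "X \<in> Ob C \<Longrightarrow> Y \<in> Ob C \<Longrightarrow> zer C X Y \<in> hom C X Y"
  using PA by blast

lemma PAX: assumes "f \<in> hom C X Y" shows
   "(\<forall>f\<in>hom C X Y. \<forall>g\<in>hom C X Y. plus C f g \<in> hom C X Y) \<and>
        (\<forall>f\<in>hom C X Y. ngt C f \<in> hom C X Y) \<and>
        (\<forall>f\<in>hom C X Y. \<forall>g\<in>hom C X Y. \<forall>h\<in>hom C X Y.
            plus C (plus C f g) h = plus C f (plus C g h)) \<and>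
        (\<forall>f\<in>hom C X Y. \<forall>g\<in>hom C X Y. plus C f g = plus C g f) \<and>
        (\<forall>f\<in>hom C X Y. plus C f (zer C X Y) = f) \<and>
        (\<forall>f\<in>hom C X Y. plus C f (ngt C f) = zer C X Y)"
proof -
  have X: "X \<in> Ob C" and Y: "Y \<in> Ob C" using assms hom_ob1 hom_ob2 by blast+
  show ?thesis using PA[rule_format, OF X Y] by (elim conjE) (intro conjI)
qed

lemma plus_hom[intro,simp]: "f \<in> hom C X Y \<Longrightarrow> g \<in> hom C X Y \<Longrightarrow> plus C f g \<in> hom C X Y"
  using PAX by blast
lemma ngt_hom[intro,simp]: "f \<in> hom C X Y \<Longrightarrow> ngt C f \<in> hom C X Y"
  using PAX by blast
lemma plus_assoc: "f \<in> hom C X Y \<Longrightarrow> g \<in> hom C X Y \<Longrightarrow> h \<in> hom C X Y \<Longrightarrow>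
  plus C (plus C f g) h = plus C f (plus C g h)"
  using PAX by blast
lemma plus_comm: "f \<in> hom C X Y \<Longrightarrow> g \<in> hom C X Y \<Longrightarrow> plus C f g = plus C g f"
  using PAX by blast
lemma plus_zer[simp]: "f \<in> hom C X Y \<Longrightarrow> plus C f (zer C X Y) = f"
  using PAX by blast
lemma plus_ngt[simp]: "f \<in> hom C X Y \<Longrightarrow> plus C f (ngt C f) = zer C X Y"
  using PAX by blast

lemma PBX: assumes "f \<in> hom C X Y" "g \<in> hom C Y Z" shows
       "(\<forall>f\<in>hom C X Y. \<forall>g\<in>hom C Y Z. \<forall>g'\<in>hom C Y Z.
            cmp C (plus C g g') f = plus C (cmp C g f) (cmp C g' f)) \<and>
        (\<forall>f\<in>hom C X Y. \<forall>f'\<in>hom C X Y. \<forall>g\<in>hom C Y Z.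
            cmp C g (plus C f f') = plus C (cmp C g f) (cmp C g f'))"
proof -
  have X: "X \<in> Ob C" and Y: "Y \<in> Ob C" and Z: "Z \<in> Ob C"
    using assms hom_ob1 hom_ob2 by blast+
  show ?thesis using PB[rule_format, OF X Y Z] .
qed

lemma distr_l: "f \<in> hom C X Y \<Longrightarrow> g \<in> hom C Y Z \<Longrightarrow> g' \<in> hom C Y Z \<Longrightarrow>
  cmp C (plus C g g') f = plus C (cmp C g f) (cmp C g' f)"
  using PBX by blast
lemma distr_r: "f \<in> hom C X Y \<Longrightarrow> f' \<in> hom C X Y \<Longrightarrow> g \<in> hom C Y Z \<Longrightarrow>
  cmp C g (plus C f f') = plus C (cmp C g f) (cmp C g f')"
  using PBX by blast

lemma zer_plus[simp]: "f \<in> hom C X Y \<Longrightarrow> plus C (zer C X Y) f = f"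
  by (metis plus_comm plus_zer zer_hom hom_ob1 hom_ob2)

lemma idem_zero: assumes "x \<in> hom C X Y" "plus C x x = x" shows "x = zer C X Y"
proof -
  have "x = plus C x (plus C x (ngt C x))" using assms by simp
  also have "\<dots> = plus C (plus C x x) (ngt C x)" using assms by (metis plus_assoc ngt_hom)
  also have "\<dots> = zer C X Y" using assms by simp
  finally show ?thesis .
qed

lemma inv_uniq: assumes "a \<in> hom C X Y" "b \<in> hom C X Y" "plus C a b = zer C X Y"
  shows "b = ngt C a"
proof -
  have "b = plus C b (plus C a (ngt C a))" using assms by simp
  also have "\<dots> = plus C (plus C a b) (ngt C a)" using assms
    by (metis ngt_hom plus_assoc plus_comm)
  also have "\<dots> = ngt C a" using assms by (simp add: ngt_hom)
  finally show ?thesis .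
qed

lemma ngt_ngt[simp]: "a \<in> hom C X Y \<Longrightarrow> ngt C (ngt C a) = a"
  by (metis inv_uniq ngt_hom plus_comm plus_ngt)

lemma ngt_zer[simp]: "X \<in> Ob C \<Longrightarrow> Y \<in> Ob C \<Longrightarrow> ngt C (zer C X Y) = zer C X Y"
  by (metis inv_uniq plus_zer zer_hom)

lemma ngt_eq_zer: "a \<in> hom C X Y \<Longrightarrow> ngt C a = zer C X Y \<Longrightarrow> a = zer C X Y"
  by (metis ngt_ngt ngt_zer hom_ob1 hom_ob2)

lemma comp_zer[simp]: assumes "g \<in> hom C Y Z" "X \<in> Ob C" shows "cmp C g (zer C X Y) = zer C X Z"
proof -
  have Y: "Y \<in> Ob C" using assms hom_ob1 by blast
  have "cmp C g (zer C X Y) = cmp C g (plus C (zer C X Y) (zer C X Y))" using assms Y by simp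
  also have "\<dots> = plus C (cmp C g (zer C X Y)) (cmp C g (zer C X Y))"
    by (rule distr_r) (use assms Y in auto)
  finally show ?thesis using idem_zero assms Y by (metis comp_hom zer_hom)
qed

lemma zer_comp[simp]: assumes "f \<in> hom C X Y" "Z \<in> Ob C" shows "cmp C (zer C Y Z) f = zer C X Z"
proof -
  have Y: "Y \<in> Ob C" using assms hom_ob2 by blast
  have "cmp C (zer C Y Z) f = cmp C (plus C (zer C Y Z) (zer C Y Z)) f" using assms Y by simp
  also have "\<dots> = plus C (cmp C (zer C Y Z) f) (cmp C (zer C Y Z) f)"
    by (rule distr_l) (use assms Y in auto)
  finally show ?thesis using idem_zero assms Y by (metis comp_hom zer_hom)
qed

lemma comp_ngt: assumes "f \<in> hom C X Y" "g \<in> hom C Y Z"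
  shows "cmp C g (ngt C f) = ngt C (cmp C g f)"
proof -
  have "plus C (cmp C g f) (cmp C g (ngt C f)) = cmp C g (plus C f (ngt C f))"
    by (rule distr_r[symmetric]) (use assms in auto)
  also have "\<dots> = zer C X Z" using assms hom_ob1 by simp
  finally show ?thesis using inv_uniq assms by (meson comp_hom ngt_hom)
qed

lemma ngt_comp: assumes "f \<in> hom C X Y" "g \<in> hom C Y Z"
  shows "cmp C (ngt C g) f = ngt C (cmp C g f)"
proof -
  have "plus C (cmp C g f) (cmp C (ngt C g) f) = cmp C (plus C g (ngt C g)) f"
    by (rule distr_l[symmetric]) (use assms in auto)
  also have "\<dots> = zer C X Z" using assms hom_ob2 by simp
  finally show ?thesis using inv_uniq assms by (meson comp_hom ngt_hom)
qed


lemma hom_tdom: "f \<in> hom C X Y \<Longrightarrow> tdom C f = X" unfolding hom_def by blast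
lemma hom_tcod: "f \<in> hom C X Y \<Longrightarrow> tcod C f = Y" unfolding hom_def by blast
lemma hom_mor: "f \<in> hom C X Y \<Longrightarrow> f \<in> Mor C" unfolding hom_def by blast

lemma tdom_id[simp]: "X \<in> Ob C \<Longrightarrow> tdom C (ident C X) = X" by (meson hom_tdom id_hom)
lemma tcod_id[simp]: "X \<in> Ob C \<Longrightarrow> tcod C (ident C X) = X" by (meson hom_tcod id_hom)
lemma tdom_zer[simp]: "X \<in> Ob C \<Longrightarrow> Y \<in> Ob C \<Longrightarrow> tdom C (zer C X Y) = X" by (meson hom_tdom zer_hom)
lemma tcod_zer[simp]: "X \<in> Ob C \<Longrightarrow> Y \<in> Ob C \<Longrightarrow> tcod C (zer C X Y) = Y" by (meson hom_tcod zer_hom)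

section \<open>Shift\<close>

lemma SH: "(\<forall>X\<in>Ob C. shO C X \<in> Ob C) \<and>
     (\<forall>X\<in>Ob C. \<forall>Y\<in>Ob C. \<forall>f\<in>hom C X Y. shM C f \<in> hom C (shO C X) (shO C Y)) \<and>
     (\<forall>X\<in>Ob C. shM C (ident C X) = ident C (shO C X)) \<and>
     (\<forall>X\<in>Ob C. \<forall>Y\<in>Ob C. \<forall>Z\<in>Ob C. \<forall>f\<in>hom C X Y. \<forall>g\<in>hom C Y Z.
        shM C (cmp C g f) = cmp C (shM C g) (shM C f)) \<and>
     (\<forall>X\<in>Ob C. \<forall>Y\<in>Ob C. \<forall>f\<in>hom C X Y. \<forall>g\<in>hom C X Y.
        shM C (plus C f g) = plus C (shM C f) (shM C g)) \<and>
     (\<forall>X\<in>Ob C. \<forall>Y\<in>Ob C. bij_betw (shM C) (hom C X Y) (hom C (shO C X) (shO C Y))) \<and>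
     (\<forall>Y\<in>Ob C. \<exists>X\<in>Ob C. is_iso_obj C (shO C X) Y)"
  using shift unfolding is_shift_def by (elim conjE) (intro conjI)

lemma shO_ob[simp,intro]: "X \<in> Ob C \<Longrightarrow> shO C X \<in> Ob C" using SH by blast
lemma shM_hom[intro,simp]: "f \<in> hom C X Y \<Longrightarrow> shM C f \<in> hom C (shO C X) (shO C Y)"
proof -
  assume a: "f \<in> hom C X Y"
  then have "X \<in> Ob C" "Y \<in> Ob C" using hom_ob1 hom_ob2 by blast+
  then show ?thesis using SH[THEN conjunct2, THEN conjunct1] a by blast
qed
lemma shM_id[simp]: "X \<in> Ob C \<Longrightarrow> shM C (ident C X) = ident C (shO C X)" using SH by blast
lemma shM_comp: "f \<in> hom C X Y \<Longrightarrow> g \<in> hom C Y Z \<Longrightarrow>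
        shM C (cmp C g f) = cmp C (shM C g) (shM C f)"
proof -
  assume a: "f \<in> hom C X Y" "g \<in> hom C Y Z"
  then have "X \<in> Ob C" "Y \<in> Ob C" "Z \<in> Ob C" using hom_ob1 hom_ob2 by blast+
  then show ?thesis using SH a by blast
qed
lemma shM_plus: "f \<in> hom C X Y \<Longrightarrow> g \<in> hom C X Y \<Longrightarrow>
        shM C (plus C f g) = plus C (shM C f) (shM C g)"
proof -
  assume a: "f \<in> hom C X Y" "g \<in> hom C X Y"
  then have "X \<in> Ob C" "Y \<in> Ob C" using hom_ob1 hom_ob2 by blast+
  then show ?thesis using SH a by blast
qed
lemma shM_bij: "X \<in> Ob C \<Longrightarrow> Y \<in> Ob C \<Longrightarrow> bij_betw (shM C) (hom C X Y) (hom C (shO C X) (shO C Y))"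
  using SH by blast
lemma shM_inj: "f \<in> hom C X Y \<Longrightarrow> g \<in> hom C X Y \<Longrightarrow> shM C f = shM C g \<Longrightarrow> f = g"
  using shM_bij[of X Y] hom_ob1 hom_ob2 unfolding bij_betw_def inj_on_def by blast
lemma shM_surj: "X \<in> Ob C \<Longrightarrow> Y \<in> Ob C \<Longrightarrow> g \<in> hom C (shO C X) (shO C Y) \<Longrightarrow>
   \<exists>f\<in>hom C X Y. shM C f = g"
proof -
  assume a: "X \<in> Ob C" "Y \<in> Ob C" "g \<in> hom C (shO C X) (shO C Y)"
  then have "g \<in> shM C ` hom C X Y" using shM_bij[of X Y] unfolding bij_betw_def by simp
  then show ?thesis by blast
qed
lemma ess_surj: "Y \<in> Ob C \<Longrightarrow> \<exists>X\<in>Ob C. is_iso_obj C (shO C X) Y"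
  using SH by blast

lemma shM_zer[simp]: assumes "X \<in> Ob C" "Y \<in> Ob C"
  shows "shM C (zer C X Y) = zer C (shO C X) (shO C Y)"
proof -
  have "shM C (zer C X Y) = shM C (plus C (zer C X Y) (zer C X Y))" using assms by simp
  also have "\<dots> = plus C (shM C (zer C X Y)) (shM C (zer C X Y))"
    by (rule shM_plus) (use assms in auto)
  finally show ?thesis using idem_zero assms by (metis shM_hom zer_hom)
qed

lemma shM_ngt: assumes "f \<in> hom C X Y" shows "shM C (ngt C f) = ngt C (shM C f)"
proof -
  have X: "X \<in> Ob C" and Y: "Y \<in> Ob C" using assms hom_ob1 hom_ob2 by blast+
  have "plus C (shM C f) (shM C (ngt C f)) = shM C (plus C f (ngt C f))"
    by (rule shM_plus[symmetric]) (use assms in auto)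
  also have "\<dots> = zer C (shO C X) (shO C Y)" using assms X Y by simp
  finally show ?thesis using inv_uniq assms by (meson ngt_hom shM_hom)
qed

section \<open>Zero objects\<close>

lemma zero_exists: "\<exists>Zo. is_zero_obj C Zo" using add unfolding is_additive_def by blast

lemma zero_from: assumes "is_zero_obj C Zo" "f \<in> hom C Zo Y" shows "f = zer C Zo Y"
proof -
  have Zo: "Zo \<in> Ob C" using assms unfolding is_zero_obj_def by blast
  have Y: "Y \<in> Ob C" using assms hom_ob2 by blast
  have "f = cmp C f (ident C Zo)" using assms by simp
  also have "\<dots> = cmp C f (zer C Zo Zo)" using assms unfolding is_zero_obj_def by simp
  also have "\<dots> = zer C Zo Y" using assms Zo by simp
  finally show ?thesis .
qed

lemma zero_to: assumes "is_zero_obj C Zo" "f \<in> hom C X Zo" shows "f = zer C X Zo"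
proof -
  have Zo: "Zo \<in> Ob C" using assms unfolding is_zero_obj_def by blast
  have X: "X \<in> Ob C" using assms hom_ob1 by blast
  have "f = cmp C (ident C Zo) f" using assms by simp
  also have "\<dots> = cmp C (zer C Zo Zo) f" using assms unfolding is_zero_obj_def by simp
  also have "\<dots> = zer C X Zo" using assms Zo by simp
  finally show ?thesis .
qed

lemma zero_shift: assumes "is_zero_obj C Zo" shows "is_zero_obj C (shO C Zo)"
proof -
  have Zo: "Zo \<in> Ob C" "ident C Zo = zer C Zo Zo" using assms unfolding is_zero_obj_def by blast+
  have "ident C (shO C Zo) = shM C (ident C Zo)" using Zo(1) by simp
  also have "\<dots> = zer C (shO C Zo) (shO C Zo)" using Zo by simp
  finally show ?thesis using Zo unfolding is_zero_obj_def by simp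
qed

section \<open>Triangles\<close>

lemma TRall: "(\<forall>t\<in>dtri C. case t of (f, g, h) \<Rightarrow> is_triangle C f g h) \<and>
     (\<forall>f g h f' g' h' u v w. dist C f g h \<and> is_triangle C f' g' h' \<and>
        is_isomorphism C u \<and> is_isomorphism C v \<and> is_isomorphism C w \<and>
        u \<in> hom C (tdom C f) (tdom C f') \<and> v \<in> hom C (tdom C g) (tdom C g') \<and>
        w \<in> hom C (tdom C h) (tdom C h') \<and>
        cmp C v f = cmp C f' u \<and> cmp C w g = cmp C g' v \<and>
        cmp C (shM C u) h = cmp C h' w
        \<longrightarrow> dist C f' g' h') \<and>
     (\<forall>X\<in>Ob C. \<forall>Z. is_zero_obj C Z \<longrightarrow>
        dist C (ident C X) (zer C X Z) (zer C Z (shO C X))) \<and>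
     (\<forall>f\<in>Mor C. \<exists>g h. dist C f g h) \<and>
     (\<forall>f g h. dist C f g h \<longleftrightarrow> dist C g h (ngt C (shM C f))) \<and>
     (\<forall>f g h f' g' h' u v. dist C f g h \<and> dist C f' g' h' \<and>
        u \<in> hom C (tdom C f) (tdom C f') \<and> v \<in> hom C (tdom C g) (tdom C g') \<and>
        cmp C v f = cmp C f' u \<longrightarrow>
        (\<exists>w\<in>hom C (tdom C h) (tdom C h').
           cmp C w g = cmp C g' v \<and> cmp C (shM C u) h = cmp C h' w)) \<and>
     (\<forall>f g f1 f2 g1 g2 h1 h2. tcod C f = tdom C g \<and>
        dist C f f1 f2 \<and> dist C g g1 g2 \<and> dist C (cmp C g f) h1 h2 \<longrightarrow>
        (\<exists>u v. u \<in> hom C (tdom C f2) (tdom C h2) \<and> v \<in> hom C (tdom C h2) (tdom C g2) \<and>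
           dist C u v (cmp C (shM C f1) g2) \<and>
           cmp C u f1 = cmp C h1 g \<and> cmp C h2 u = f2 \<and>
           cmp C v h1 = g1 \<and> cmp C g2 v = cmp C (shM C f) h2))"
  using tri unfolding is_triangulated_def by (elim conjE) (intro conjI)

lemma TR1iso: "dist C f g h \<Longrightarrow> is_triangle C f' g' h' \<Longrightarrow>
        is_isomorphism C u \<Longrightarrow> is_isomorphism C v \<Longrightarrow> is_isomorphism C w \<Longrightarrow>
        u \<in> hom C (tdom C f) (tdom C f') \<Longrightarrow> v \<in> hom C (tdom C g) (tdom C g') \<Longrightarrow>
        w \<in> hom C (tdom C h) (tdom C h') \<Longrightarrow>
        cmp C v f = cmp C f' u \<Longrightarrow> cmp C w g = cmp C g' v \<Longrightarrow>
        cmp C (shM C u) h = cmp C h' w \<Longrightarrow> dist C f' g' h'"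
  using TRall[THEN conjunct2, THEN conjunct1, rule_format, of f g h f' g' h' u v w] by blast

lemma TR1zero: "X \<in> Ob C \<Longrightarrow> is_zero_obj C Zo \<Longrightarrow> dist C (ident C X) (zer C X Zo) (zer C Zo (shO C X))"
  using TRall[THEN conjunct2, THEN conjunct2, THEN conjunct1, rule_format, of X Zo] by blast

lemma rot: "dist C f g h \<longleftrightarrow> dist C g h (ngt C (shM C f))"
  using TRall[THEN conjunct2, THEN conjunct2, THEN conjunct2, THEN conjunct2, THEN conjunct1, rule_format, of f g h] by blast

lemma TR3: "dist C f g h \<Longrightarrow> dist C f' g' h' \<Longrightarrow>
        u \<in> hom C (tdom C f) (tdom C f') \<Longrightarrow> v \<in> hom C (tdom C g) (tdom C g') \<Longrightarrow>
        cmp C v f = cmp C f' u \<Longrightarrow>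
        (\<exists>w\<in>hom C (tdom C h) (tdom C h').
           cmp C w g = cmp C g' v \<and> cmp C (shM C u) h = cmp C h' w)"
  using TRall[THEN conjunct2, THEN conjunct2, THEN conjunct2, THEN conjunct2, THEN conjunct2, THEN conjunct1, rule_format, of f g h f' g' h' u v] by blast

lemma TR4: "tcod C f = tdom C g \<Longrightarrow>
        dist C f f1 f2 \<Longrightarrow> dist C g g1 g2 \<Longrightarrow> dist C (cmp C g f) h1 h2 \<Longrightarrow>
        (\<exists>u v. u \<in> hom C (tdom C f2) (tdom C h2) \<and> v \<in> hom C (tdom C h2) (tdom C g2) \<and>
           dist C u v (cmp C (shM C f1) g2) \<and>
           cmp C u f1 = cmp C h1 g \<and> cmp C h2 u = f2 \<and>
           cmp C v h1 = g1 \<and> cmp C g2 v = cmp C (shM C f) h2)"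
  using TRall[THEN conjunct2, THEN conjunct2, THEN conjunct2, THEN conjunct2, THEN conjunct2, THEN conjunct2, rule_format, of f g f1 f2 g1 g2 h1 h2] by blast

lemma dist_ext: assumes "f \<in> hom C X Y"
  shows "\<exists>Z g h. dist C f g h \<and> g \<in> hom C Y Z \<and> h \<in> hom C Z (shO C X)"
proof -
  obtain g h where d: "dist C f g h" using TRall[THEN conjunct2, THEN conjunct2, THEN conjunct2, THEN conjunct1] hom_mor[OF assms] by blast
  then show ?thesis using assms unfolding dist_def is_triangle_def hom_def by auto
qed

lemma dist_homs: assumes "dist C f g h" "f \<in> hom C X Y"
  shows "g \<in> hom C Y (tcod C g)" "h \<in> hom C (tcod C g) (shO C X)"
  using assms unfolding dist_def is_triangle_def hom_def by auto

lemma dist_h: assumes "dist C f g h" "f \<in> hom C X Y" "g \<in> hom C Y Z"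
  shows "h \<in> hom C Z (shO C X)"
  using assms unfolding dist_def is_triangle_def hom_def by auto

lemma dist_f: assumes "dist C f g h" "g \<in> hom C Y Z"
  shows "f \<in> hom C (tdom C f) Y"
  using assms unfolding dist_def is_triangle_def hom_def by auto

end


context TC begin

lemma zer_zer[simp]: "X \<in> Ob C \<Longrightarrow> Y \<in> Ob C \<Longrightarrow> Z \<in> Ob C \<Longrightarrow> cmp C (zer C Y Z) (zer C X Y) = zer C X Z"
  by (simp add: zer_comp)

lemma rot1: "dist C f g h \<Longrightarrow> dist C g h (ngt C (shM C f))" using rot by blast

lemma comp_tri_zero: assumes d: "dist C f g h" and f: "f \<in> hom C X Y" and g: "g \<in> hom C Y Z"
  shows "cmp C g f = zer C X Z"
proof -
  obtain Zo where z: "is_zero_obj C Zo" using zero_exists by blast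
  have Zo: "Zo \<in> Ob C" using z unfolding is_zero_obj_def by blast
  have X: "X \<in> Ob C" using f hom_ob1 by blast
  have Zob: "Z \<in> Ob C" using g hom_ob2 by blast
  have t1: "dist C (ident C X) (zer C X Zo) (zer C Zo (shO C X))" using TR1zero X z by blast
  have h: "h \<in> hom C Z (shO C X)" using dist_h d f g by blast
  obtain w where w: "w \<in> hom C (tdom C (zer C Zo (shO C X))) (tdom C h)"
     "cmp C w (zer C X Zo) = cmp C g f"
    using TR3[OF t1 d, of "ident C X" f] X Zo f g h
    by (auto simp: hom_tdom)
  have "w \<in> hom C Zo Z" using w(1) Zo X h by (simp add: hom_tdom)
  then have "cmp C w (zer C X Zo) = zer C X Z" using X by simp
  then show ?thesis using w(2) by simp
qed

lemma L1: assumes d: "dist C f g h" and f: "f \<in> hom C X Y" and g: "g \<in> hom C Y Z"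
  and t: "t \<in> hom C W Y" and tz: "cmp C g t = zer C W Z"
  shows "\<exists>s\<in>hom C W X. cmp C f s = t"
proof -
  obtain Zo where z: "is_zero_obj C Zo" using zero_exists by blast
  have Zo: "Zo \<in> Ob C" using z unfolding is_zero_obj_def by blast
  have X: "X \<in> Ob C" using f hom_ob1 by blast
  have Y: "Y \<in> Ob C" using f hom_ob2 by blast
  have Zob: "Z \<in> Ob C" using g hom_ob2 by blast
  have W: "W \<in> Ob C" using t hom_ob1 by blast
  have h: "h \<in> hom C Z (shO C X)" using dist_h d f g by blast
  have t1: "dist C (zer C W Zo) (zer C Zo (shO C W)) (ngt C (shM C (ident C W)))"
    using rot1[OF TR1zero[OF W z]] .
  have t2: "dist C g h (ngt C (shM C f))" using rot1[OF d] .
  have sf: "ngt C (shM C f) \<in> hom C (shO C X) (shO C Y)" using f by simp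
  obtain w where w: "w \<in> hom C (tdom C (ngt C (shM C (ident C W)))) (tdom C (ngt C (shM C f)))"
     "cmp C (shM C t) (ngt C (shM C (ident C W))) = cmp C (ngt C (shM C f)) w"
    using TR3[OF t1 t2, of t "zer C Zo Z"] W Zo Zob f g h t tz
    by (auto simp: hom_tdom)
  have "tdom C (ngt C (shM C (ident C W))) = shO C W" by (rule hom_tdom[of _ _ "shO C W"]) (use W in simp)
  then have wh: "w \<in> hom C (shO C W) (shO C X)" using w(1) sf by (simp add: hom_tdom)
  have a: "cmp C (shM C t) (ngt C (ident C (shO C W))) = ngt C (shM C t)"
    using comp_ngt[of "ident C (shO C W)" "shO C W" "shO C W" "shM C t" "shO C Y"] W t id_r[OF shM_hom[OF t]] by simp
  have b: "cmp C (ngt C (shM C f)) w = ngt C (cmp C (shM C f) w)"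
    using ngt_comp[of w "shO C W" "shO C X" "shM C f" "shO C Y"] wh f by simp
  have "ngt C (shM C t) = ngt C (cmp C (shM C f) w)"
    using w(2) W a b by simp
  then have e: "shM C t = cmp C (shM C f) w"
    by (metis ngt_ngt shM_hom t f wh comp_hom)
  obtain s where s: "s \<in> hom C W X" "shM C s = w" using shM_surj[OF W X wh] by blast
  have "shM C (cmp C f s) = shM C t" using e s f by (simp add: shM_comp)
  then have "cmp C f s = t" using shM_inj s f t by (meson comp_hom)
  then show ?thesis using s by blast
qed

lemma zero_triangle: assumes z: "is_zero_obj C Zo" and W: "W \<in> Ob C"
  shows "dist C (zer C Zo W) (ident C W) (zer C W (shO C Zo))"
proof -
  have Zo: "Zo \<in> Ob C" using z unfolding is_zero_obj_def by blast
  have "dist C (ident C W) (zer C W (shO C Zo)) (zer C (shO C Zo) (shO C W))"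
    using TR1zero[OF W zero_shift[OF z]] .
  moreover have "ngt C (shM C (zer C Zo W)) = zer C (shO C Zo) (shO C W)" using Zo W by simp
  ultimately show ?thesis using rot by metis
qed

lemma L2: assumes d: "dist C f g h" and f: "f \<in> hom C X Y" and g: "g \<in> hom C Y Z"
  and t: "t \<in> hom C Y W" and tz: "cmp C t f = zer C X W"
  shows "\<exists>s\<in>hom C Z W. cmp C s g = t"
proof -
  obtain Zo where z: "is_zero_obj C Zo" using zero_exists by blast
  have Zo: "Zo \<in> Ob C" using z unfolding is_zero_obj_def by blast
  have X: "X \<in> Ob C" using f hom_ob1 by blast
  have W: "W \<in> Ob C" using t hom_ob2 by blast
  have h: "h \<in> hom C Z (shO C X)" using dist_h d f g by blast
  have t2: "dist C (zer C Zo W) (ident C W) (zer C W (shO C Zo))" using zero_triangle z W .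
  obtain w where w: "w \<in> hom C (tdom C h) (tdom C (zer C W (shO C Zo)))"
     "cmp C w g = cmp C (ident C W) t"
  proof -
    have e: "cmp C t f = cmp C (zer C Zo W) (zer C X Zo)" using X Zo W tz by simp
    have u: "zer C X Zo \<in> hom C (tdom C f) (tdom C (zer C Zo W))" using X Zo W f by (simp add: hom_tdom)
    have v: "t \<in> hom C (tdom C g) (tdom C (ident C W))" using W g t by (simp add: hom_tdom)
    show ?thesis using that TR3[OF d t2 u v e] by blast
  qed
  have "w \<in> hom C Z W" using w(1) h W Zo by (simp add: hom_tdom)
  then show ?thesis using w(2) t by auto
qed


lemma split_biprod:
  assumes d: "dist C p q r" and p: "p \<in> hom C U' Y" and q: "q \<in> hom C Y V2"
    and q0: "q = zer C Y V2"
  shows "\<exists>K. is_biproduct C Y K U'"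
proof -
  have Y: "Y \<in> Ob C" using p hom_ob2 by blast
  have U': "U' \<in> Ob C" using p hom_ob1 by blast
  have V2: "V2 \<in> Ob C" using q hom_ob2 by blast
  have iY: "ident C Y \<in> hom C Y Y" using Y by simp
  have "cmp C q (ident C Y) = zer C Y V2" using q q0 by simp
  then obtain s where s: "s \<in> hom C Y U'" and ps: "cmp C p s = ident C Y"
    using L1[OF d p q iY] by blast
  obtain K s1 s2 where ds: "dist C s s1 s2" and s1: "s1 \<in> hom C U' K" and s2: "s2 \<in> hom C K (shO C Y)"
    using dist_ext[OF s] by blast
  have K: "K \<in> Ob C" using s1 hom_ob2 by blast
  have s1s: "cmp C s1 s = zer C Y K" using comp_tri_zero[OF ds s s1] .
  have ds': "dist C s1 s2 (ngt C (shM C s))" using rot1[OF ds] .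
  have nss: "ngt C (shM C s) \<in> hom C (shO C Y) (shO C U')" using s by simp
  have "cmp C (ngt C (shM C s)) s2 = zer C K (shO C U')" using comp_tri_zero[OF rot1[OF ds'] s2 nss] .
  moreover have "cmp C (ngt C (shM C s)) s2 = ngt C (cmp C (shM C s) s2)"
    using ngt_comp[OF s2 shM_hom[OF s]] .
  ultimately have sss2: "cmp C (shM C s) s2 = zer C K (shO C U')"
    using ngt_eq_zer[of "cmp C (shM C s) s2"] s s2 by (metis comp_hom shM_hom)
  have s20: "s2 = zer C K (shO C Y)"
  proof -
    have "s2 = cmp C (ident C (shO C Y)) s2" using s2 by simp
    also have "\<dots> = cmp C (shM C (cmp C p s)) s2" using ps Y by simp
    also have "\<dots> = cmp C (cmp C (shM C p) (shM C s)) s2" using shM_comp[OF s p] by simp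
    also have "\<dots> = cmp C (shM C p) (cmp C (shM C s) s2)"
      using assoc[OF s2 shM_hom[OF s] shM_hom[OF p]] by simp
    also have "\<dots> = zer C K (shO C Y)" using sss2 p K by simp
    finally show ?thesis .
  qed
  have iK: "ident C K \<in> hom C K K" using K by simp
  have "cmp C s2 (ident C K) = zer C K (shO C Y)" using s20 s2 by simp
  then obtain j where j: "j \<in> hom C K U'" and s1j: "cmp C s1 j = ident C K"
    using L1[OF ds' s1 s2 iK] by blast
  define x where "x = cmp C s (cmp C p j)"
  have x: "x \<in> hom C K U'" unfolding x_def using s p j by blast
  define j' where "j' = plus C j (ngt C x)"
  have j': "j' \<in> hom C K U'" unfolding j'_def using j x by simp
  have pj: "cmp C p j \<in> hom C K Y" using p j by blast
  have px: "cmp C p x = cmp C p j"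
    unfolding x_def using assoc[OF pj s p] ps pj by simp
  have pj': "cmp C p j' = zer C K Y"
  proof -
    have "cmp C p j' = plus C (cmp C p j) (cmp C p (ngt C x))"
      unfolding j'_def by (rule distr_r[OF j _ p]) (use x in simp)
    also have "\<dots> = plus C (cmp C p j) (ngt C (cmp C p j))" using comp_ngt[OF x p] px by simp
    also have "\<dots> = zer C K Y" using pj by simp
    finally show ?thesis .
  qed
  have s1x: "cmp C s1 x = zer C K K"
    unfolding x_def using assoc[OF pj s s1] s1s pj K by simp
  have s1j': "cmp C s1 j' = ident C K"
  proof -
    have "cmp C s1 j' = plus C (cmp C s1 j) (cmp C s1 (ngt C x))"
      unfolding j'_def by (rule distr_r[OF j _ s1]) (use x in simp)
    also have "\<dots> = ident C K" using comp_ngt[OF x s1] s1x s1j K by simp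
    finally show ?thesis .
  qed
  define y where "y = cmp C j' s1"
  have y: "y \<in> hom C U' U'" unfolding y_def using j' s1 by blast
  define dd where "dd = plus C (ident C U') (ngt C y)"
  have dd: "dd \<in> hom C U' U'" unfolding dd_def using y U' by simp
  have s1y: "cmp C s1 y = s1" unfolding y_def using assoc[OF s1 j' s1] s1j' s1 by simp
  have s1d: "cmp C s1 dd = zer C U' K"
  proof -
    have "cmp C s1 dd = plus C (cmp C s1 (ident C U')) (cmp C s1 (ngt C y))"
      unfolding dd_def by (rule distr_r[of _ U' U' _ s1 K]) (simp_all add: y U' s1)
    also have "\<dots> = plus C s1 (ngt C s1)" using comp_ngt[OF y s1] s1y s1 by simp
    also have "\<dots> = zer C U' K" using s1 by simp
    finally show ?thesis .
  qed
  obtain p1 where p1: "p1 \<in> hom C U' Y" and sp1: "cmp C s p1 = dd"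
    using L1[OF ds s s1 dd s1d] by blast
  have ys: "cmp C y s = zer C Y U'"
    unfolding y_def using assoc[OF s s1 j'] s1s j' Y by simp
  have ds_: "cmp C dd s = s"
  proof -
    have "cmp C dd s = plus C (cmp C (ident C U') s) (cmp C (ngt C y) s)"
      unfolding dd_def by (rule distr_l[where X=Y and Y=U' and Z=U']) (simp_all add: y U' s)
    also have "\<dots> = s" using ngt_comp[OF s y] ys s Y U' by simp
    finally show ?thesis .
  qed
  have yj: "cmp C y j' = j'" unfolding y_def using assoc[OF j' s1 j'] s1j' j' by simp
  have dj: "cmp C dd j' = zer C K U'"
  proof -
    have "cmp C dd j' = plus C (cmp C (ident C U') j') (cmp C (ngt C y) j')"
      unfolding dd_def by (rule distr_l[where X=K and Y=U' and Z=U']) (simp_all add: y U' j')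
    also have "\<dots> = plus C j' (ngt C j')" using ngt_comp[OF j' y] yj j' by simp
    also have "\<dots> = zer C K U'" using j' by simp
    finally show ?thesis .
  qed
  have p1s: "cmp C p1 s = ident C Y"
  proof -
    have "cmp C p1 s = cmp C (cmp C p s) (cmp C p1 s)" using ps id_l[OF comp_hom[OF s p1]] by simp
    also have "\<dots> = cmp C p (cmp C s (cmp C p1 s))"
      using assoc[OF comp_hom[OF s p1] s p] by simp
    also have "\<dots> = cmp C p (cmp C (cmp C s p1) s)" using assoc[OF s p1 s] by simp
    also have "\<dots> = ident C Y" using sp1 ds_ ps by simp
    finally show ?thesis .
  qed
  have p1j: "cmp C p1 j' = zer C K Y"
  proof -
    have pj1: "cmp C p1 j' \<in> hom C K Y" using p1 j' by blast
    have "cmp C p1 j' = cmp C (cmp C p s) (cmp C p1 j')" using ps pj1 by simp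
    also have "\<dots> = cmp C p (cmp C s (cmp C p1 j'))"
      using assoc[OF pj1 s p] by simp
    also have "\<dots> = cmp C p (cmp C (cmp C s p1) j')" using assoc[OF j' p1 s] by simp
    also have "\<dots> = zer C K Y" using sp1 dj p K by simp
    finally show ?thesis .
  qed
  have sum: "plus C (cmp C s p1) (cmp C j' s1) = ident C U'"
  proof -
    have "plus C (cmp C s p1) (cmp C j' s1) = plus C (plus C (ident C U') (ngt C y)) y"
      using sp1 unfolding dd_def y_def by simp
    also have "\<dots> = plus C (ident C U') (plus C (ngt C y) y)"
      by (rule plus_assoc[where X=U' and Y=U']) (simp_all add: y U')
    also have "\<dots> = ident C U'" using y U' plus_comm[of "ngt C y" U' U' y] by simp
    finally show ?thesis .
  qed
  have "is_biproduct C Y K U'"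
    unfolding is_biproduct_def using Y K U' s j' p1 s1 p1s s1j' p1j s1s sum by blast
  then show ?thesis by blast
qed


lemma zero_via_iso: assumes iso: "is_iso_obj C A1 A2" and t: "t \<in> hom C A1 W"
  and z: "\<And>x. x \<in> hom C A2 W \<Longrightarrow> x = zer C A2 W"
  shows "t = zer C A1 W"
proof -
  obtain i j where i: "i \<in> hom C A1 A2" and j: "j \<in> hom C A2 A1" and ji: "cmp C j i = ident C A1"
    using iso unfolding is_iso_obj_def by blast
  have "t = cmp C t (cmp C j i)" using ji t by simp
  also have "\<dots> = cmp C (cmp C t j) i" using assoc[OF i j t] .
  also have "\<dots> = cmp C (zer C A2 W) i" using z[OF comp_hom[OF j t]] by simp
  also have "\<dots> = zer C A1 W" using i t hom_ob2 zer_comp by blast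
  finally show ?thesis .
qed

lemma ext1D: "ext1_zero C A B \<Longrightarrow> X \<in> A \<Longrightarrow> Y \<in> B \<Longrightarrow> t \<in> hom C X (shO C Y) \<Longrightarrow> t = zer C X (shO C Y)"
  unfolding ext1_zero_def by blast

lemma iso_is_isomorphism: assumes i: "i \<in> hom C A1 A2" and j: "j \<in> hom C A2 A1"
  and ji: "cmp C j i = ident C A1" and ij: "cmp C i j = ident C A2"
  shows "is_isomorphism C i"
  unfolding is_isomorphism_def using i j ji ij hom_mor[OF i] hom_tdom[OF i] hom_tcod[OF i] by auto

lemma ident_iso: "X \<in> Ob C \<Longrightarrow> is_isomorphism C (ident C X)"
  by (rule iso_is_isomorphism[of _ X X "ident C X"]) (simp_all add: id_l[OF id_hom])

lemma in_U:
  assumes cp: "cotorsion_pair C U V" and Y: "Y \<in> Ob C"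
    and e: "\<And>V' t. V' \<in> V \<Longrightarrow> t \<in> hom C Y (shO C V') \<Longrightarrow> t = zer C Y (shO C V')"
  shows "Y \<in> U"
proof -
  have "Y \<in> ext_star C U (shift_up C V)" using cp Y unfolding cotorsion_pair_def by blast
  then obtain A B f g h where A: "A \<in> U" and B: "B \<in> shift_up C V" and d: "dist C f g h"
    and f: "f \<in> hom C A Y" and g: "g \<in> hom C Y B"
    unfolding ext_star_def by blast
  obtain V' where V': "V' \<in> V" and iso: "is_iso_obj C (shO C V') B"
    using B unfolding shift_up_def by blast
  obtain k ki where k: "k \<in> hom C (shO C V') B" and ki: "ki \<in> hom C B (shO C V')"
    and kki: "cmp C k ki = ident C B"
    using iso unfolding is_iso_obj_def by blast
  have g0: "g = zer C Y B"
  proof -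
    have "g = cmp C (cmp C k ki) g" using kki g by simp
    also have "\<dots> = cmp C k (cmp C ki g)" using assoc[OF g ki k] by simp
    also have "\<dots> = cmp C k (zer C Y (shO C V'))" using e[OF V' comp_hom[OF g ki]] by simp
    also have "\<dots> = zer C Y B" using k Y by simp
    finally show ?thesis .
  qed
  obtain K where bp: "is_biproduct C Y K A" using split_biprod[OF d f g g0] by blast
  have "is_subcat C U" using cp unfolding cotorsion_pair_def by blast
  then show ?thesis using bp A unfolding is_subcat_def by blast
qed

end


context TC begin

lemma decomp:
  assumes cp: "cotorsion_pair C S T" and Y: "Y \<in> Ob C"
  shows "\<exists>P Q s1 s2 s3. P \<in> shift_down C S \<and> Q \<in> T \<and> dist C s1 s2 s3 \<and>
     s1 \<in> hom C P Y \<and> s2 \<in> hom C Y Q \<and> s3 \<in> hom C Q (shO C P)"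
proof -
  have "shO C Y \<in> ext_star C S (shift_up C T)" using cp Y unfolding cotorsion_pair_def by auto
  then obtain S2 T2' p q r where S2: "S2 \<in> S" and T2': "T2' \<in> shift_up C T" and d: "dist C p q r"
    and p: "p \<in> hom C S2 (shO C Y)" and q: "q \<in> hom C (shO C Y) T2'"
    unfolding ext_star_def by blast
  have r: "r \<in> hom C T2' (shO C S2)" using dist_h[OF d p q] .
  obtain T2 where T2: "T2 \<in> T" and isoT: "is_iso_obj C (shO C T2) T2'"
    using T2' unfolding shift_up_def by blast
  obtain \<kappa> \<kappa>i where \<kappa>: "\<kappa> \<in> hom C (shO C T2) T2'" and \<kappa>i: "\<kappa>i \<in> hom C T2' (shO C T2)"
    and \<kappa>1: "cmp C \<kappa>i \<kappa> = ident C (shO C T2)" and \<kappa>2: "cmp C \<kappa> \<kappa>i = ident C T2'"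
    using isoT unfolding is_iso_obj_def by blast
  have S2o: "S2 \<in> Ob C" using p hom_ob1 by blast
  obtain P where P: "P \<in> Ob C" and isoP: "is_iso_obj C (shO C P) S2" using ess_surj[OF S2o] by blast
  obtain \<iota> \<iota>i where \<iota>: "\<iota> \<in> hom C (shO C P) S2" and \<iota>i: "\<iota>i \<in> hom C S2 (shO C P)"
    and \<iota>1: "cmp C \<iota>i \<iota> = ident C (shO C P)" and \<iota>2: "cmp C \<iota> \<iota>i = ident C S2"
    using isoP unfolding is_iso_obj_def by blast
  have T2o: "T2 \<in> Ob C" using \<kappa> hom_ob1 shO_ob by (metis cp cotorsion_pair_def is_subcat_def subsetD T2)
  define x1 where "x1 = cmp C p \<iota>"
  define x2 where "x2 = cmp C \<kappa>i q"
  define x3 where "x3 = cmp C (shM C \<iota>i) (cmp C r \<kappa>)"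
  have x1: "x1 \<in> hom C (shO C P) (shO C Y)" unfolding x1_def using \<iota> p by blast
  have x2: "x2 \<in> hom C (shO C Y) (shO C T2)" unfolding x2_def using \<kappa>i q by blast
  have x3: "x3 \<in> hom C (shO C T2) (shO C (shO C P))" unfolding x3_def using \<kappa> r shM_hom[OF \<iota>i] by blast
  have dx: "dist C x1 x2 x3"
  proof (rule TR1iso[OF d, where u="\<iota>i" and v="ident C (shO C Y)" and w="\<kappa>i"])
    show "is_triangle C x1 x2 x3" unfolding is_triangle_def
      using x1 x2 x3 hom_mor hom_tdom hom_tcod by metis
    show "is_isomorphism C \<iota>i" using iso_is_isomorphism[OF \<iota>i \<iota> \<iota>2 \<iota>1] .
    show "is_isomorphism C (ident C (shO C Y))" using ident_iso Y by simp
    show "is_isomorphism C \<kappa>i" using iso_is_isomorphism[OF \<kappa>i \<kappa> \<kappa>2 \<kappa>1] .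
    show "\<iota>i \<in> hom C (tdom C p) (tdom C x1)" using \<iota>i p x1 by (simp add: hom_tdom)
    show "ident C (shO C Y) \<in> hom C (tdom C q) (tdom C x2)" using Y q x2 by (simp add: hom_tdom)
    show "\<kappa>i \<in> hom C (tdom C r) (tdom C x3)" using \<kappa>i r x3 by (simp add: hom_tdom)
    show "cmp C (ident C (shO C Y)) p = cmp C x1 \<iota>i"
      unfolding x1_def using p assoc[OF \<iota>i \<iota> p] \<iota>2 by simp
    show "cmp C \<kappa>i q = cmp C x2 (ident C (shO C Y))"
      unfolding x2_def using x2[unfolded x2_def] by simp
    have "cmp C x3 \<kappa>i = cmp C (shM C \<iota>i) (cmp C (cmp C r \<kappa>) \<kappa>i)"
      unfolding x3_def using assoc[OF \<kappa>i comp_hom[OF \<kappa> r] shM_hom[OF \<iota>i]] by simp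
    also have "\<dots> = cmp C (shM C \<iota>i) r"
      using assoc[OF \<kappa>i \<kappa> r] \<kappa>2 r by simp
    finally show "cmp C (shM C \<iota>i) r = cmp C x3 \<kappa>i" by simp
  qed
  obtain s1 where s1: "s1 \<in> hom C P Y" "shM C s1 = ngt C x1"
    using shM_surj[OF P Y] x1 by blast
  obtain s2 where s2: "s2 \<in> hom C Y T2" "shM C s2 = ngt C x2"
    using shM_surj[OF Y T2o] x2 by blast
  obtain s3 where s3: "s3 \<in> hom C T2 (shO C P)" "shM C s3 = ngt C x3"
    using shM_surj[OF T2o shO_ob[OF P]] x3 by blast
  have "dist C (ngt C (shM C s1)) (ngt C (shM C s2)) (ngt C (shM C s3))"
    using dx s1 s2 s3 x1 x2 x3 by simp
  then have "dist C s1 s2 s3" using rot by blast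
  moreover have "P \<in> shift_down C S" unfolding shift_down_def using P S2 isoP by blast
  ultimately show ?thesis using T2 s1 s2 s3 by blast
qed

end

theorem claim3p4:
  fixes C :: "('o, 'm) tcat"
    and S T U V :: "'o set"
    and X Uo Vo A B Z :: 'o
    and f a h f' b h' z k :: 'm
  assumes tri: "is_triangulated C"
    and twin: "twin_cotorsion_pair C S T U V"
    and X: "X \<in> Ob C"
    \<comment> \<open>V \<rightarrow> U \<rightarrow>a C \<rightarrow> V[1], U \<in> \<U>, V \<in> \<V>\<close>
    and t1: "dist C f a h" "f \<in> hom C Vo Uo" "a \<in> hom C Uo X" "Uo \<in> U" "Vo \<in> V"
    \<comment> \<open>T[-1] \<rightarrow> S[-1] \<rightarrow>b U \<rightarrow> T, with A = T[-1], B = S[-1]\<close>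
    and t2: "dist C f' b h'" "f' \<in> hom C A B" "b \<in> hom C B Uo"
            "shO C A \<in> T" "shO C B \<in> S"
    \<comment> \<open>S[-1] \<rightarrow>(a b) C \<rightarrow>z Z_C \<rightarrow> S\<close>
    and t3: "dist C (cmp C a b) z k" "z \<in> hom C X Z"
  shows "Z \<in> Cplus C T U V \<and> (X \<in> Cminus C S T U \<longrightarrow> Z \<in> Hheart C S T U V)"
proof -
  interpret TC C by unfold_locales (rule tri)
  have cpST: "cotorsion_pair C S T" and cpUV: "cotorsion_pair C U V" and eSV: "ext1_zero C S V"
    using twin unfolding twin_cotorsion_pair_def by blast+
  have eUV: "ext1_zero C U V" and eST: "ext1_zero C S T"
    using cpUV cpST unfolding cotorsion_pair_def by blast+
  have subV: "V \<subseteq> Ob C" using cpUV unfolding cotorsion_pair_def is_subcat_def by blast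
  have Zo: "Z \<in> Ob C" using t3(2) hom_ob2 by blast
  have A: "A \<in> Ob C" using t2(2) hom_ob1 by blast
  have Bo: "B \<in> Ob C" using t2(2) hom_ob2 by blast
  have Vo: "Vo \<in> Ob C" using t1(2) hom_ob1 by blast
  have ab: "cmp C a b \<in> hom C B X" using t2(3) t1(3) by blast
  have h': "h' \<in> hom C Uo (shO C A)" using dist_h[OF t2(1-3)] .
  have h: "h \<in> hom C X (shO C Vo)" using dist_h[OF t1(1-3)] .
  have k: "k \<in> hom C Z (shO C B)" using dist_h[OF t3(1) ab t3(2)] .
  have nf': "ngt C (shM C f') \<in> hom C (shO C A) (shO C B)" using t2(2) by simp
  have nf: "ngt C (shM C f) \<in> hom C (shO C Vo) (shO C Uo)" using t1(2) by simp
  have nab: "ngt C (shM C (cmp C a b)) \<in> hom C (shO C B) (shO C X)" using ab by simp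
  have AU: "shO C A \<in> U"
  proof (rule in_U[OF cpUV shO_ob[OF A]])
    fix V' t assume V': "V' \<in> V" and t: "t \<in> hom C (shO C A) (shO C V')"
    have r2: "dist C h' (ngt C (shM C f')) (ngt C (shM C b))" using rot1[OF rot1[OF t2(1)]] .
    have "cmp C t h' = zer C Uo (shO C V')" using ext1D[OF eUV t1(4) V' comp_hom[OF h' t]] .
    then obtain s where s: "s \<in> hom C (shO C B) (shO C V')" and st: "cmp C s (ngt C (shM C f')) = t"
      using L2[OF r2 h' nf' t] by blast
    have "s = zer C (shO C B) (shO C V')" using ext1D[OF eSV t2(5) V' s] .
    then show "t = zer C (shO C A) (shO C V')" using st nf' subV V' by auto
  qed
  have WA: "shO C A \<in> Wcore T U" unfolding Wcore_def using AU t2(4) by blast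
  obtain u v where u: "u \<in> hom C (tdom C (ngt C (shM C f'))) (tdom C k)"
      and v: "v \<in> hom C (tdom C k) (tdom C (ngt C (shM C f)))"
      and duv: "dist C u v (cmp C (shM C h') (ngt C (shM C f)))"
    using TR4[of b a h' "ngt C (shM C f')" h "ngt C (shM C f)" z k] rot1[OF t2(1)] rot1[OF t1(1)] t3(1)
      t1(3) t2(3) by (auto simp: hom_tdom hom_tcod)
  have u': "u \<in> hom C (shO C A) Z" using u nf' k by (simp add: hom_tdom)
  have v': "v \<in> hom C Z (shO C Vo)" using v nf k by (simp add: hom_tdom)
  have VV: "shO C Vo \<in> shift_up C V"
    unfolding shift_up_def is_iso_obj_def using t1(5) Vo id_l[OF id_hom[OF shO_ob[OF Vo]]]
    by (intro CollectI conjI bexI[of _ Vo]) (auto intro!: bexI[of _ "ident C (shO C Vo)"])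
  have Cp: "Z \<in> Cplus C T U V"
    unfolding Cplus_def ext_star_def using Zo WA VV duv u' v' by blast
  have Cm: "Z \<in> Cminus C S T U" if XC: "X \<in> Cminus C S T U"
  proof -
    obtain P W1 \<alpha> \<beta> \<gamma> where P: "P \<in> shift_down C S" and W1: "W1 \<in> Wcore T U"
      and d\<alpha>: "dist C \<alpha> \<beta> \<gamma>" and \<alpha>: "\<alpha> \<in> hom C P X" and \<beta>: "\<beta> \<in> hom C X W1"
      using XC unfolding Cminus_def ext_star_def by blast
    have \<gamma>: "\<gamma> \<in> hom C W1 (shO C P)" using dist_h[OF d\<alpha> \<alpha> \<beta>] .
    obtain S1 where S1: "S1 \<in> S" and isoP: "is_iso_obj C (shO C P) S1"
      using P unfolding shift_down_def by blast
    obtain P' Q s1 s2 s3 where P': "P' \<in> shift_down C S" and Q: "Q \<in> T" and ds: "dist C s1 s2 s3"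
      and s1: "s1 \<in> hom C P' Z" and s2: "s2 \<in> hom C Z Q" and s3: "s3 \<in> hom C Q (shO C P')"
      using decomp[OF cpST Zo] by blast
    obtain S2 where S2: "S2 \<in> S" and isoP': "is_iso_obj C (shO C P') S2"
      using P' unfolding shift_down_def by blast
    have za: "cmp C z \<alpha> \<in> hom C P Z" using \<alpha> t3(2) by blast
    obtain Q' q1 q2 where dq: "dist C (cmp C z \<alpha>) q1 q2" and q1: "q1 \<in> hom C Z Q'"
      and q2: "q2 \<in> hom C Q' (shO C P)"
      using dist_ext[OF za] by blast
    obtain u2 v2 where u2: "u2 \<in> hom C (tdom C \<gamma>) (tdom C q2)"
      and v2: "v2 \<in> hom C (tdom C q2) (tdom C (ngt C (shM C (cmp C a b))))"
      and duv2: "dist C u2 v2 (cmp C (shM C \<beta>) (ngt C (shM C (cmp C a b))))"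
      using TR4[of \<alpha> z \<beta> \<gamma> k "ngt C (shM C (cmp C a b))" q1 q2] d\<alpha> rot1[OF t3(1)] dq
        \<alpha> t3(2) by (auto simp: hom_tdom hom_tcod)
    have u2': "u2 \<in> hom C W1 Q'" using u2 \<gamma> q2 by (simp add: hom_tdom)
    have v2': "v2 \<in> hom C Q' (shO C B)" using v2 q2 nab by (simp add: hom_tdom)
    have W1U: "W1 \<in> U" using W1 unfolding Wcore_def by blast
    have Qo: "Q \<in> Ob C" using s2 hom_ob2 by blast
    have Po: "P \<in> Ob C" using \<alpha> hom_ob1 by blast
    have x: "cmp C s2 (cmp C z \<alpha>) \<in> hom C P Q" using za s2 by blast
    have "shM C (cmp C s2 (cmp C z \<alpha>)) = zer C (shO C P) (shO C Q)"
      by (rule zero_via_iso[OF isoP]) (use x ext1D[OF eST S1 Q] in auto)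
    then have x0: "cmp C s2 (cmp C z \<alpha>) = zer C P Q"
      using shM_inj[OF x zer_hom[OF Po Qo]] Po Qo by simp
    obtain c where c: "c \<in> hom C P P'" and s1c: "cmp C s1 c = cmp C z \<alpha>"
      using L1[OF ds s1 s2 za x0] by blast
    have Qu: "Q \<in> U"
    proof (rule in_U[OF cpUV Qo])
      fix V' t assume V': "V' \<in> V" and t: "t \<in> hom C Q (shO C V')"
      have V'o: "shO C V' \<in> Ob C" using t hom_ob2 by blast
      define t' where "t' = cmp C t s2"
      have t': "t' \<in> hom C Z (shO C V')" unfolding t'_def using s2 t by blast
      have P'o: "P' \<in> Ob C" using s1 hom_ob1 by blast
      have s21: "cmp C s2 s1 = zer C P' Q" using comp_tri_zero[OF ds s1 s2] .
      have "cmp C t' (cmp C z \<alpha>) = cmp C t (cmp C s2 (cmp C s1 c))"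
        unfolding t'_def using assoc[OF za s2 t] s1c by simp
      also have "\<dots> = cmp C t (cmp C (cmp C s2 s1) c)" using assoc[OF c s1 s2] by simp
      also have "\<dots> = zer C P (shO C V')" using s21 c t Qo Po by simp
      finally have t'z: "cmp C t' (cmp C z \<alpha>) = zer C P (shO C V')" .
      obtain \<tau> where \<tau>: "\<tau> \<in> hom C Q' (shO C V')" and \<tau>q: "cmp C \<tau> q1 = t'"
        using L2[OF dq za q1 t' t'z] by blast
      have "cmp C \<tau> u2 = zer C W1 (shO C V')" using ext1D[OF eUV W1U V' comp_hom[OF u2' \<tau>]] .
      then obtain \<tau>0 where \<tau>0: "\<tau>0 \<in> hom C (shO C B) (shO C V')" and \<tau>0v: "cmp C \<tau>0 v2 = \<tau>"
        using L2[OF duv2 u2' v2' \<tau>] by blast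
      have "\<tau>0 = zer C (shO C B) (shO C V')" using ext1D[OF eSV t2(5) V' \<tau>0] .
      then have "\<tau> = zer C Q' (shO C V')" using \<tau>0v v2' V'o by simp
      then have t'0: "cmp C t s2 = zer C Z (shO C V')" using \<tau>q q1 V'o t'_def by simp
      have ds': "dist C s2 s3 (ngt C (shM C s1))" using rot1[OF ds] .
      obtain t1 where t1': "t1 \<in> hom C (shO C P') (shO C V')" and t1s: "cmp C t1 s3 = t"
        using L2[OF ds' s2 s3 t t'0] by blast
      have "t1 = zer C (shO C P') (shO C V')"
        by (rule zero_via_iso[OF isoP' t1']) (use ext1D[OF eSV S2 V'] in auto)
      then show "t = zer C Q (shO C V')" using t1s s3 V'o by simp
    qed
    have "Q \<in> Wcore T U" unfolding Wcore_def using Q Qu by blast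
    then show ?thesis unfolding Cminus_def ext_star_def using Zo P' ds s1 s2 by blast
  qed
  show ?thesis using Cp Cm unfolding Hheart_def by blast
qed


end
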